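(* Let $n$ be even and let $\nu_\mathcal{G}$ be the uniform measure on a finite set $\mathcal{G}$ of two-qudit unitaries (not necessarily closed under inverses), $\mathcal{G}^\dagger$ the set of inverses. Then for every positive integer $t$, $$g\big(\nu^{(n)}_{par}(\mathcal{G})*\nu^{(n)}_{par}(\mathcal{G}^\dagger),t\big)\ge\frac12\,g\big(\nu^{(n)}_{par}(\mathcal{G}\mathcal{G}^\dagger),t\big).$$
   Context: Consider $n$ qudits on a line, each of dimension $d$. For a probability measure $\eta$ on $\mathrm{U}(d^2)$, $\nu^{(n)}_{par}(\eta)$ is the probability measure on $\mathrm{U}(d^n)$ that with probability $1/2$ applies $U_{12}\otimes U_{34}\otimes\cdots\otimes U_{n-1,n}$ and with probability $1/2$ applies $U_{23}\otimes U_{45}\otimes\cdots\otimes U_{n-2,n-1}$ (identity on qudits $1$ and $n$), each $U_{ij}$ drawn independently from $\eta$ and acting on qudits $i,j$. $\nu^{(n)}_{par}(\mathcal{G})$, $\nu^{(n)}_{par}(\mathcal{G}^\dagger)$, $\nu^{(n)}_{par}(\mathcal{G}\mathcal{G}^\dagger)$ correspond to $\eta=\nu_\mathcal{G}$, the uniform measure on $\mathcal{G}^\dagger$, and $\nu_\mathcal{G}*\nu_{\mathcal{G}^\dagger}$. For a probability measure $\nu$ on $\mathrm{U}(D)$: $T_{\nu,t}=\int\mathrm{d}\nu(U)U^{\otimes t}\otimes\bar U^{\otimes t}$, $g(\nu,t)=1-\|T_{\nu,t}-T_{\mu,t}\|_\infty$ with $\mu$ the Haar measure, and $*$ is convolution.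 *)

theory Defs
  imports "HOL-Analysis.Analysis" "HOL-Probability.Probability"
begin

text \<open>Square matrices of size D are represented as functions nat => nat => complex,
  with entries outside the index range 0..<D meaningless (forced to 0 where relevant).\<close>

type_synonym cmat = "nat \<Rightarrow> nat \<Rightarrow> complex"

definition mmul :: "nat \<Rightarrow> cmat \<Rightarrow> cmat \<Rightarrow> cmat" where
  "mmul D A B = (\<lambda>i j. if i < D \<and> j < D then (\<Sum>k<D. A i k * B k j) else 0)"

definition adj :: "cmat \<Rightarrow> cmat" where
  "adj A = (\<lambda>i j. cnj (A j i))"

definition idm :: "nat \<Rightarrow> cmat" where
  "idm D = (\<lambda>i j. if i < D \<and> j < D \<and> i = j then 1 else 0)"

definition unitary_group :: "nat \<Rightarrow> cmat set" where
  "unitary_group D = {U. (\<forall>i j. \<not> (i < D \<and> j < D) \<longrightarrow> U i j = 0)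
                         \<and> mmul D (adj U) U = idm D \<and> mmul D U (adj U) = idm D}"

definition vnorm :: "nat \<Rightarrow> (nat \<Rightarrow> complex) \<Rightarrow> real" where
  "vnorm N x = sqrt (\<Sum>i<N. (cmod (x i))\<^sup>2)"

definition mvmul :: "nat \<Rightarrow> cmat \<Rightarrow> (nat \<Rightarrow> complex) \<Rightarrow> (nat \<Rightarrow> complex)" where
  "mvmul N A x = (\<lambda>i. \<Sum>j<N. A i j * x j)"

definition opnorm :: "nat \<Rightarrow> cmat \<Rightarrow> real" where
  "opnorm N A = Sup ((\<lambda>x. vnorm N (mvmul N A x)) ` {x. vnorm N x \<le> 1})"

text \<open>k-th base-D digit of r; used to identify 0..<D^m with ({0..<D})^m.\<close>
definition dig :: "nat \<Rightarrow> nat \<Rightarrow> nat \<Rightarrow> nat" where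
  "dig D k r = r div D ^ k mod D"

text \<open>Entry (r,c) of U^{\<otimes>t} \<otimes> conj(U)^{\<otimes>t}, a D^(2t) x D^(2t) matrix.\<close>
definition tens_entry :: "nat \<Rightarrow> nat \<Rightarrow> cmat \<Rightarrow> nat \<Rightarrow> nat \<Rightarrow> complex" where
  "tens_entry D t U r c =
     (\<Prod>k<t. U (dig D k r) (dig D k c)) * (\<Prod>k<t. cnj (U (dig D (t + k) r) (dig D (t + k) c)))"

definition moment_op :: "cmat measure \<Rightarrow> nat \<Rightarrow> nat \<Rightarrow> cmat" where
  "moment_op M D t = (\<lambda>r c. if r < D ^ (2 * t) \<and> c < D ^ (2 * t)
                             then integral\<^sup>L M (\<lambda>U. tens_entry D t U r c) else 0)"

definition is_haar :: "nat \<Rightarrow> cmat measure \<Rightarrow> bool" where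
  "is_haar D \<mu> \<longleftrightarrow> prob_space \<mu> \<and> sets \<mu> = sets borel \<and>
     unitary_group D \<in> sets \<mu> \<and> emeasure \<mu> (unitary_group D) = 1 \<and>
     (\<forall>V \<in> unitary_group D. distr \<mu> borel (\<lambda>U. mmul D V U) = \<mu>)"

definition gap :: "nat \<Rightarrow> cmat measure \<Rightarrow> cmat measure \<Rightarrow> nat \<Rightarrow> real" where
  "gap D \<mu> \<nu> t = 1 - opnorm (D ^ (2 * t))
       (\<lambda>r c. moment_op \<nu> D t r c - moment_op \<mu> D t r c)"

definition conv :: "nat \<Rightarrow> cmat pmf \<Rightarrow> cmat pmf \<Rightarrow> cmat pmf" where
  "conv D p q = map_pmf (\<lambda>(U, V). mmul D U V) (pair_pmf p q)"

text \<open>Qudits are numbered 0..<n; basis state x < d^n has qudit k in state dig d k x.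
  A two-qudit gate acting on qudits (s, s+1) is a d^2 x d^2 matrix whose index for the
  local state (a,b) is a*d + b.\<close>
definition pair_idx :: "nat \<Rightarrow> nat \<Rightarrow> nat \<Rightarrow> nat" where
  "pair_idx d s x = dig d s x * d + dig d (s + 1) x"

text \<open>Layer: gates g s on qudits (s,s+1) for s in S, identity on uncovered qudits.\<close>
definition layer_mat :: "nat \<Rightarrow> nat \<Rightarrow> nat set \<Rightarrow> (nat \<Rightarrow> cmat) \<Rightarrow> cmat" where
  "layer_mat d n S g = (\<lambda>x y. if x < d ^ n \<and> y < d ^ n then
      (\<Prod>s\<in>S. g s (pair_idx d s x) (pair_idx d s y)) *
      (\<Prod>k\<in>{k. k < n \<and> k \<notin> S \<and> \<not> (k \<ge> 1 \<and> k - 1 \<in> S)}.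
          (if dig d k x = dig d k y then 1 else 0))
    else 0)"

definition layer_pmf :: "nat \<Rightarrow> nat \<Rightarrow> nat set \<Rightarrow> cmat pmf \<Rightarrow> cmat pmf" where
  "layer_pmf d n S \<eta> = map_pmf (layer_mat d n S) (Pi_pmf S (\<lambda>_ _. 0) (\<lambda>_. \<eta>))"

text \<open>\<nu>_par^{(n)}(\<eta>): with prob. 1/2 the layer U_{12} \<otimes> U_{34} \<otimes> ..., with prob. 1/2 the
  layer U_{23} \<otimes> U_{45} \<otimes> ... (0-based: gates starting at even resp. odd positions).\<close>
definition nu_par :: "nat \<Rightarrow> nat \<Rightarrow> cmat pmf \<Rightarrow> cmat pmf" where
  "nu_par d n \<eta> = bind_pmf (bernoulli_pmf (1/2)) (\<lambda>b.
     if b then layer_pmf d n {s. even s \<and> s + 1 < n} \<eta>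
          else layer_pmf d n {s. odd s \<and> s + 1 < n} \<eta>)"

end

theory Submission
  imports Defs
begin

lemma dig_lt: "0 < D \<Longrightarrow> dig D k r < D"
  by (simp add: dig_def)

lemma dig_0: "dig D 0 x = x mod D"
  by (simp add: dig_def)

lemma dig_Suc: "dig D (Suc k) x = dig D k (x div D)"
  by (simp add: dig_def div_mult2_eq mult.commute)

lemma sum_split_mult:
  fixes f :: "nat \<Rightarrow> 'a::comm_monoid_add"
  assumes "0 < D"
  shows "(\<Sum>z<D * M. f z) = (\<Sum>a<D. \<Sum>y<M. f (a + D * y))"
proof -
  have "(\<Sum>z<D * M. f z) = (\<Sum>p\<in>{..<D} \<times> {..<M}. f (fst p + D * snd p))"
  proof (rule sum.reindex_bij_witness[where i="\<lambda>p. fst p + D * snd p" and j="\<lambda>z. (z mod D, z div D)"])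
    fix p assume "p \<in> {..<D} \<times> {..<M}"
    then obtain a y where p: "p = (a, y)" "a < D" "y < M" by auto
    have "a + D * y < D + D * y" using p by simp
    also have "\<dots> = D * (y + 1)" by (simp add: algebra_simps)
    also have "\<dots> \<le> D * M" using p by (intro mult_left_mono) auto
    finally show "fst p + D * snd p \<in> {..<D * M}" using p by simp
    show "((fst p + D * snd p) mod D, (fst p + D * snd p) div D) = p" using p assms by simp
  next
    fix z assume "z \<in> {..<D * M}"
    then show "(z mod D, z div D) \<in> {..<D} \<times> {..<M}" using assms
      by (auto simp: less_mult_imp_div_less mult.commute)
    show "fst (z mod D, z div D) + D * snd (z mod D, z div D) = z" by simp
  qed auto
  also have "\<dots> = (\<Sum>a<D. \<Sum>y<M. f (a + D * y))"
    by (simp add: sum.cartesian_product split_beta)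
  finally show ?thesis .
qed

lemma sum_digits_prod:
  fixes F :: "nat \<Rightarrow> nat \<Rightarrow> 'a::comm_semiring_1"
  assumes "0 < D"
  shows "(\<Sum>z<D ^ m. \<Prod>k<m. F k (dig D k z)) = (\<Prod>k<m. \<Sum>j<D. F k j)"
  using assms
proof (induction m arbitrary: F)
  case 0
  then show ?case by simp
next
  case (Suc m)
  have "(\<Sum>z<D ^ Suc m. \<Prod>k<Suc m. F k (dig D k z))
      = (\<Sum>a<D. \<Sum>y<D ^ m. \<Prod>k<Suc m. F k (dig D k (a + D * y)))"
    using Suc.prems by (simp add: sum_split_mult)
  also have "\<dots> = (\<Sum>a<D. \<Sum>y<D ^ m. F 0 a * (\<Prod>k<m. F (Suc k) (dig D k y)))"
    using Suc.prems by (intro sum.cong refl) (simp only: prod.lessThan_Suc_shift, simp add: dig_0 dig_Suc)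
  also have "\<dots> = (\<Sum>a<D. F 0 a) * (\<Sum>y<D ^ m. (\<Prod>k<m. F (Suc k) (dig D k y)))"
    by (simp add: sum_product)
  also have "\<dots> = (\<Sum>a<D. F 0 a) * (\<Prod>k<m. \<Sum>j<D. F (Suc k) j)"
    using Suc.IH[of "\<lambda>k. F (Suc k)"] Suc.prems by simp
  also have "\<dots> = (\<Prod>k<Suc m. \<Sum>j<D. F k j)"
    by (simp only: prod.lessThan_Suc_shift)
  finally show ?case .
qed

lemma digits_eq:
  assumes "0 < D" "a < D ^ m" "b < D ^ m" "\<forall>k<m. dig D k a = dig D k b"
  shows "a = b"
  using assms
proof (induction m arbitrary: a b)
  case 0
  then show ?case by simp
next
  case (Suc m)
  have "a div D < D ^ m" "b div D < D ^ m" using Suc.prems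
    by (auto simp: less_mult_imp_div_less mult.commute)
  moreover have "\<forall>k<m. dig D k (a div D) = dig D k (b div D)"
    using Suc.prems(4) by (auto simp: dig_Suc[symmetric])
  ultimately have "a div D = b div D" using Suc by blast
  moreover have "a mod D = b mod D" using Suc.prems(4)[rule_format, of 0] by (simp add: dig_0)
  ultimately show ?case by (metis div_mult_mod_eq)
qed

definition zo :: "nat \<Rightarrow> cmat \<Rightarrow> bool" where
  "zo D U \<longleftrightarrow> (\<forall>i j. \<not> (i < D \<and> j < D) \<longrightarrow> U i j = 0)"

lemma zo_mmul: "zo D (mmul D A B)" by (simp add: zo_def mmul_def)

lemma zo_adj: "zo D A \<Longrightarrow> zo D (adj A)" by (auto simp: zo_def adj_def)

lemma adj_adj[simp]: "adj (adj A) = A" by (simp add: adj_def)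

lemma mmul_assoc: "mmul D (mmul D A B) C = mmul D A (mmul D B C)"
proof -
  have "(\<Sum>k<D. (\<Sum>l<D. A i l * B l k) * C k j) = (\<Sum>l<D. A i l * (\<Sum>k<D. B l k * C k j))" for i j
  proof -
    have "(\<Sum>k<D. (\<Sum>l<D. A i l * B l k) * C k j) = (\<Sum>k<D. \<Sum>l<D. A i l * B l k * C k j)"
      by (simp add: sum_distrib_right)
    also have "\<dots> = (\<Sum>l<D. \<Sum>k<D. A i l * B l k * C k j)"
      by (rule sum.swap)
    also have "\<dots> = (\<Sum>l<D. A i l * (\<Sum>k<D. B l k * C k j))"
      by (simp add: sum_distrib_left mult.assoc)
    finally show ?thesis .
  qed
  then show ?thesis by (auto simp: mmul_def fun_eq_iff intro!: sum.cong)
qed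

lemma adj_mmul: "adj (mmul D A B) = mmul D (adj B) (adj A)"
  by (auto simp: adj_def mmul_def fun_eq_iff mult.commute)

lemma sum_delta_l: "i < (D::nat) \<Longrightarrow> (\<Sum>k<D. (if i < D \<and> k < D \<and> i = k then 1 else 0) * (f k::complex)) = f i"
proof -
  assume "i < D"
  have "(\<Sum>k<D. (if i < D \<and> k < D \<and> i = k then 1 else 0) * f k) = (\<Sum>k<D. if k = i then f k else 0)"
    by (intro sum.cong) auto
  also have "\<dots> = f i" using \<open>i < D\<close> by (subst sum.delta) simp_all
  finally show ?thesis .
qed

lemma sum_delta_r: "j < (D::nat) \<Longrightarrow> (\<Sum>k<D. (f k::complex) * (if k < D \<and> j < D \<and> k = j then 1 else 0)) = f j"
proof -
  assume "j < D"
  have "(\<Sum>k<D. f k * (if k < D \<and> j < D \<and> k = j then 1 else 0)) = (\<Sum>k<D. if k = j then f k else 0)"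
    by (intro sum.cong) auto
  also have "\<dots> = f j" using \<open>j < D\<close> by (subst sum.delta) simp_all
  finally show ?thesis .
qed

lemma mmul_idm_left: "zo D A \<Longrightarrow> mmul D (idm D) A = A"
  unfolding mmul_def idm_def zo_def fun_eq_iff using sum_delta_l[of _ D "\<lambda>k. A k _"] by auto

lemma mmul_idm_right: "zo D A \<Longrightarrow> mmul D A (idm D) = A"
  unfolding mmul_def idm_def zo_def fun_eq_iff using sum_delta_r[of _ D "\<lambda>k. A _ k"] by auto

lemma unitary_zo: "U \<in> unitary_group D \<Longrightarrow> zo D U"
  by (simp add: unitary_group_def zo_def)

lemma unitary_adj: "U \<in> unitary_group D \<Longrightarrow> adj U \<in> unitary_group D"
  unfolding unitary_group_def by (auto simp: adj_def)

lemma unitary_mmul: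
  assumes "A \<in> unitary_group D" "B \<in> unitary_group D"
  shows "mmul D A B \<in> unitary_group D"
proof -
  have zA: "zo D A" and zB: "zo D B" using assms unitary_zo by auto
  have aA: "mmul D (adj A) A = idm D" "mmul D A (adj A) = idm D"
   and aB: "mmul D (adj B) B = idm D" "mmul D B (adj B) = idm D"
    using assms by (auto simp: unitary_group_def)
  have "mmul D (adj (mmul D A B)) (mmul D A B) = mmul D (adj B) (mmul D (mmul D (adj A) A) B)"
    by (simp add: adj_mmul mmul_assoc)
  also have "\<dots> = idm D" by (simp add: aA aB mmul_idm_left zB)
  finally have 1: "mmul D (adj (mmul D A B)) (mmul D A B) = idm D" .
  have "mmul D (mmul D A B) (adj (mmul D A B)) = mmul D A (mmul D (mmul D B (adj B)) (adj A))"
    by (simp add: adj_mmul mmul_assoc)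
  also have "\<dots> = idm D" by (simp add: aA aB mmul_idm_left zo_adj zA)
  finally have 2: "mmul D (mmul D A B) (adj (mmul D A B)) = idm D" .
  show ?thesis using 1 2 zo_mmul[of D A B] by (simp add: unitary_group_def zo_def)
qed

lemma prod_lessThan_add:
  fixes f :: "nat \<Rightarrow> 'a::comm_monoid_mult"
  shows "(\<Prod>k<a + b. f k) = (\<Prod>k<a. f k) * (\<Prod>k<b. f (a + k))"
  by (induction b) (simp_all add: mult.assoc)

lemma tens_as_prod:
  "tens_entry D t U r c = (\<Prod>k<t + t. (if k < t then U (dig D k r) (dig D k c)
                                     else cnj (U (dig D k r) (dig D k c))))"
  unfolding tens_entry_def prod_lessThan_add by simp

lemma tens_mult_F:
  fixes F :: "nat \<Rightarrow> nat \<Rightarrow> complex"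
  assumes F_def: "\<And>k j. F k j = (if k < t then U (dig D k r) j * V j (dig D k c)
                           else cnj (U (dig D k r) j) * cnj (V j (dig D k c)))"
  shows "tens_entry D t U r z * tens_entry D t V z c = (\<Prod>k<t + t. F k (dig D k z))"
proof -
      have "tens_entry D t U r z * tens_entry D t V z c
          = (\<Prod>k<t + t. (if k < t then U (dig D k r) (dig D k z) else cnj (U (dig D k r) (dig D k z)))
                         * (if k < t then V (dig D k z) (dig D k c) else cnj (V (dig D k z) (dig D k c))))"
        unfolding tens_as_prod by (rule prod.distrib[symmetric])
      also have "\<dots> = (\<Prod>k<t + t. F k (dig D k z))"
        by (rule prod.cong) (simp_all add: F_def)
      finally show ?thesis .
qed

lemma tens_mmul:
  assumes "0 < D"
  shows "tens_entry D t (mmul D U V) r c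
       = (\<Sum>z<D ^ (2 * t). tens_entry D t U r z * tens_entry D t V z c)"
proof -
  define F where "F = (\<lambda>k j. if k < t then U (dig D k r) j * V j (dig D k c)
                           else cnj (U (dig D k r) j) * cnj (V j (dig D k c)))"
  have Fd: "\<And>k j. F k j = (if k < t then U (dig D k r) j * V j (dig D k c)
                           else cnj (U (dig D k r) j) * cnj (V j (dig D k c)))"
    by (simp add: F_def)
  have "tens_entry D t (mmul D U V) r c = (\<Prod>k<t + t. \<Sum>j<D. F k j)"
    unfolding tens_as_prod
  proof (rule prod.cong[OF refl])
    fix k assume "k \<in> {..<t+t}"
    show "(if k < t then mmul D U V (dig D k r) (dig D k c) else cnj (mmul D U V (dig D k r) (dig D k c))) = (\<Sum>j<D. F k j)"
      unfolding Fd mmul_def using dig_lt[OF assms] by simp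
  qed
  also have "\<dots> = (\<Sum>z<D ^ (t + t). \<Prod>k<t + t. F k (dig D k z))"
    by (rule sum_digits_prod[OF assms, symmetric])
  also have "\<dots> = (\<Sum>z<D ^ (2 * t). tens_entry D t U r z * tens_entry D t V z c)"
    unfolding mult_2 by (rule sum.cong[OF refl], rule tens_mult_F[symmetric], rule Fd)
  finally show ?thesis .
qed

lemma tens_adj: "tens_entry D t (adj U) r c = cnj (tens_entry D t U c r)"
  by (simp add: tens_entry_def adj_def)

lemma prod_indicator:
  "finite A \<Longrightarrow> (\<Prod>k\<in>A. (if P k then 1 else 0::'a::comm_semiring_1)) = (if \<forall>k\<in>A. P k then 1 else 0)"
  by (induction rule: finite_induct) auto

lemma tens_idm:
  assumes "0 < D" "r < D ^ (2 * t)" "c < D ^ (2 * t)"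
  shows "tens_entry D t (idm D) r c = (if r = c then 1 else 0)"
proof -
  have "tens_entry D t (idm D) r c = (\<Prod>k<t + t. (if dig D k r = dig D k c then 1 else 0))"
    unfolding tens_as_prod using assms(1) by (intro prod.cong) (auto simp: idm_def dig_lt)
  also have "\<dots> = (if (\<forall>k<t+t. dig D k r = dig D k c) then 1 else 0)"
    using prod_indicator[of "{..<t+t}" "\<lambda>k. dig D k r = dig D k c"] by force
  also have "\<dots> = (if r = c then 1 else 0)"
    using digits_eq[OF assms(1), of r "t+t" c] assms by (auto simp: mult_2)
  finally show ?thesis .
qed

lemma tens_unitary:
  assumes "0 < D" "U \<in> unitary_group D" "a < D ^ (2 * t)" "b < D ^ (2 * t)"
  shows "(\<Sum>r<D ^ (2 * t). cnj (tens_entry D t U r a) * tens_entry D t U r b) = (if a = b then 1 else 0)"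
proof -
  have "mmul D (adj U) U = idm D" using assms by (simp add: unitary_group_def)
  then have "(if a = b then 1 else 0) = tens_entry D t (mmul D (adj U) U) a b"
    using tens_idm assms by simp
  also have "\<dots> = (\<Sum>r<D ^ (2 * t). cnj (tens_entry D t U r a) * tens_entry D t U r b)"
    using tens_mmul[OF assms(1), of t "adj U" U a b] by (simp add: tens_adj)
  finally show ?thesis by simp
qed

definition valid :: "nat \<Rightarrow> nat set \<Rightarrow> bool" where
  "valid n S \<longleftrightarrow> (\<forall>s\<in>S. s + 1 < n) \<and> (\<forall>s\<in>S. s + 1 \<notin> S)"

definition unc :: "nat \<Rightarrow> nat set \<Rightarrow> nat set" where
  "unc n S = {k. k < n \<and> k \<notin> S \<and> \<not> (k \<ge> 1 \<and> k - 1 \<in> S)}"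

lemma layer_mat_unc: "layer_mat d n S g = (\<lambda>x y. if x < d ^ n \<and> y < d ^ n then
      (\<Prod>s\<in>S. g s (pair_idx d s x) (pair_idx d s y)) *
      (\<Prod>k\<in>unc n S. (if dig d k x = dig d k y then 1 else 0)) else 0)"
  unfolding layer_mat_def unc_def by (rule refl)

lemma finite_unc: "finite (unc n S)" by (simp add: unc_def)

lemma valid_finite: "valid n S \<Longrightarrow> finite S"
  by (rule finite_subset[of _ "{..<n}"]) (auto simp: valid_def)

lemma pair_idx_Suc: "pair_idx d (Suc s) x = pair_idx d s (x div d)"
  by (simp add: pair_idx_def dig_Suc)

lemma pair_idx_0: "pair_idx d 0 x = x mod d * d + x div d mod d"
  by (simp add: pair_idx_def dig_0 dig_Suc)

lemma lt_sq: "a < d \<Longrightarrow> b < (d::nat) \<Longrightarrow> a * d + b < d * d"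
proof -
  assume "a < d" "b < d"
  then have "a * d + b < a * d + d" by simp
  also have "\<dots> = (a + 1) * d" by simp
  also have "\<dots> \<le> d * d" using \<open>a < d\<close> by (intro mult_right_mono) auto
  finally show ?thesis .
qed

lemma pair_idx_lt: "0 < d \<Longrightarrow> pair_idx d s x < d ^ 2"
  by (simp add: pair_idx_def power2_eq_square lt_sq dig_lt)

lemma div_lt_pow: "(x::nat) < d ^ Suc m \<Longrightarrow> x div d < d ^ m"
  using less_mult_imp_div_less[of x "d^m" d] by (simp add: mult.commute)

lemma unc_Suc:
  assumes "0 \<notin> S"
  shows "unc (Suc m) S = insert 0 (Suc ` unc m {s. Suc s \<in> S})"
proof (rule set_eqI)
  fix k show "k \<in> unc (Suc m) S \<longleftrightarrow> k \<in> insert 0 (Suc ` unc m {s. Suc s \<in> S})"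
  proof (cases k)
    case 0 then show ?thesis using assms by (simp add: unc_def)
  next
    case (Suc k')
    have "k \<in> Suc ` unc m {s. Suc s \<in> S} \<longleftrightarrow> k' \<in> unc m {s. Suc s \<in> S}"
      using Suc by auto
    moreover have "k' \<in> unc m {s. Suc s \<in> S} \<longleftrightarrow> k \<in> unc (Suc m) S"
      using Suc assms by (cases k') (auto simp: unc_def)
    ultimately show ?thesis using Suc by auto
  qed
qed

lemma unc_SucSuc:
  assumes "0 \<in> S" "1 \<notin> S"
  shows "unc (Suc (Suc m)) S = (\<lambda>k. Suc (Suc k)) ` unc m {s. Suc (Suc s) \<in> S}"
proof (rule set_eqI)
  fix k show "k \<in> unc (Suc (Suc m)) S \<longleftrightarrow> k \<in> (\<lambda>k. Suc (Suc k)) ` unc m {s. Suc (Suc s) \<in> S}"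
  proof (cases "k \<ge> 2")
    case False then have "k = 0 \<or> k = 1" by auto
    then show ?thesis using assms by (auto simp: unc_def)
  next
    case True
    then obtain k' where k: "k = Suc (Suc k')" by (metis add_2_eq_Suc le_add_diff_inverse)
    have "k \<in> (\<lambda>k. Suc (Suc k)) ` unc m {s. Suc (Suc s) \<in> S} \<longleftrightarrow> k' \<in> unc m {s. Suc (Suc s) \<in> S}"
      using k by auto
    moreover have "k' \<in> unc m {s. Suc (Suc s) \<in> S} \<longleftrightarrow> k \<in> unc (Suc (Suc m)) S"
      using k assms by (cases k') (auto simp: unc_def)
    ultimately show ?thesis using k by auto
  qed
qed

lemma S_Suc: "0 \<notin> S \<Longrightarrow> S = Suc ` {s. Suc s \<in> S}"
  by (auto simp: image_iff) (metis not0_implies_Suc)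

lemma S_SucSuc: "0 \<in> S \<Longrightarrow> 1 \<notin> S \<Longrightarrow> S = insert 0 ((\<lambda>k. Suc (Suc k)) ` {s. Suc (Suc s) \<in> S})"
  apply (auto simp: image_iff)
  by (metis One_nat_def add_2_eq_Suc le_add_diff_inverse less_2_cases not_less)

lemma valid_Suc: "valid (Suc m) S \<Longrightarrow> valid m {s. Suc s \<in> S}"
  by (auto simp: valid_def)

lemma valid_SucSuc: "valid (Suc (Suc m)) S \<Longrightarrow> valid m {s. Suc (Suc s) \<in> S}"
  by (auto simp: valid_def)

lemma layer_dec1:
  assumes "0 < d" "valid (Suc m) S" "0 \<notin> S" "x < d ^ Suc m" "y < d ^ Suc m"
  shows "layer_mat d (Suc m) S g x y = (if x mod d = y mod d then 1 else 0) *
           layer_mat d m {s. Suc s \<in> S} (\<lambda>s. g (Suc s)) (x div d) (y div d)"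
proof -
  have fin: "finite {s. Suc s \<in> S}" using valid_finite[OF valid_Suc[OF assms(2)]] .
  have "(\<Prod>s\<in>S. g s (pair_idx d s x) (pair_idx d s y))
      = (\<Prod>s\<in>{s. Suc s \<in> S}. g (Suc s) (pair_idx d s (x div d)) (pair_idx d s (y div d)))"
    by (subst S_Suc[OF assms(3)], subst prod.reindex) (auto simp: pair_idx_Suc)
  moreover have "(\<Prod>k\<in>unc (Suc m) S. (if dig d k x = dig d k y then 1 else 0))
      = (if x mod d = y mod d then 1 else 0) *
        (\<Prod>k\<in>unc m {s. Suc s \<in> S}. (if dig d k (x div d) = dig d k (y div d) then 1 else (0::complex)))"
    unfolding unc_Suc[OF assms(3)]
    by (subst prod.insert) (auto simp: finite_unc prod.reindex dig_Suc dig_0)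
  moreover have "x div d < d ^ m" "y div d < d ^ m" using assms div_lt_pow by auto
  ultimately show ?thesis
    using assms by (simp add: layer_mat_unc)
qed

lemma layer_dec2:
  assumes "0 < d" "valid (Suc (Suc m)) S" "0 \<in> S" "x < d ^ Suc (Suc m)" "y < d ^ Suc (Suc m)"
  shows "layer_mat d (Suc (Suc m)) S g x y = g 0 (pair_idx d 0 x) (pair_idx d 0 y) *
           layer_mat d m {s. Suc (Suc s) \<in> S} (\<lambda>s. g (Suc (Suc s))) (x div d div d) (y div d div d)"
proof -
  have one: "1 \<notin> S" using assms(2,3) by (auto simp: valid_def)
  have fin: "finite {s. Suc (Suc s) \<in> S}" using valid_finite[OF valid_SucSuc[OF assms(2)]] .
  have "(\<Prod>s\<in>S. g s (pair_idx d s x) (pair_idx d s y))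
      = g 0 (pair_idx d 0 x) (pair_idx d 0 y) *
        (\<Prod>s\<in>{s. Suc (Suc s) \<in> S}. g (Suc (Suc s)) (pair_idx d s (x div d div d)) (pair_idx d s (y div d div d)))"
  proof -
    have "(\<Prod>s\<in>S. g s (pair_idx d s x) (pair_idx d s y))
      = g 0 (pair_idx d 0 x) (pair_idx d 0 y) *
        (\<Prod>s\<in>(\<lambda>k. Suc (Suc k)) ` {s. Suc (Suc s) \<in> S}. g s (pair_idx d s x) (pair_idx d s y))"
      by (subst S_SucSuc[OF assms(3) one], subst prod.insert) (auto simp: fin)
    also have "(\<Prod>s\<in>(\<lambda>k. Suc (Suc k)) ` {s. Suc (Suc s) \<in> S}. g s (pair_idx d s x) (pair_idx d s y))
       = (\<Prod>s\<in>{s. Suc (Suc s) \<in> S}. g (Suc (Suc s)) (pair_idx d (Suc (Suc s)) x) (pair_idx d (Suc (Suc s)) y))"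
      by (subst prod.reindex) (auto simp: inj_on_def)
    finally show ?thesis by (simp add: pair_idx_Suc)
  qed
  moreover have "(\<Prod>k\<in>unc (Suc (Suc m)) S. (if dig d k x = dig d k y then 1 else 0))
      = (\<Prod>k\<in>unc m {s. Suc (Suc s) \<in> S}. (if dig d k (x div d div d) = dig d k (y div d div d) then 1 else (0::complex)))"
    unfolding unc_SucSuc[OF assms(3) one]
    by (subst prod.reindex) (auto simp: inj_on_def dig_Suc)
  moreover have "x div d div d < d ^ m" "y div d div d < d ^ m" using assms(4,5) div_lt_pow by blast+
  ultimately show ?thesis
    using assms by (simp add: layer_mat_unc)
qed

lemma lt_split: "(a::nat) < d \<Longrightarrow> w < M \<Longrightarrow> a + d * w < d * M"
proof -
  assume "a < d" "w < M"
  then have "a + d * w < d + d * w" by simp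
  also have "\<dots> = d * (w + 1)" by simp
  also have "\<dots> \<le> d * M" using \<open>w < M\<close> by (intro mult_left_mono) auto
  finally show ?thesis .
qed

lemma sum_pairs:
  fixes F :: "nat \<Rightarrow> 'a::comm_monoid_add"
  assumes "0 < d"
  shows "(\<Sum>c<d ^ 2. F c) = (\<Sum>a<d. \<Sum>b<d. F (a * d + b))"
proof -
  have "(\<Sum>c<d ^ 2. F c) = (\<Sum>b<d. \<Sum>a<d. F (b + d * a))"
    using sum_split_mult[OF assms, where M=d and f=F] by (simp add: power2_eq_square)
  also have "\<dots> = (\<Sum>a<d. \<Sum>b<d. F (b + d * a))" by (rule sum.swap)
  also have "\<dots> = (\<Sum>a<d. \<Sum>b<d. F (a * d + b))" by (simp add: mult.commute add.commute)
  finally show ?thesis .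
qed

lemma valid_0: "valid 0 S \<Longrightarrow> S = {}" by (auto simp: valid_def)

lemma valid_cases:
  assumes "valid n S" "n \<noteq> 0"
  obtains m where "n = Suc m" "0 \<notin> S" | m where "n = Suc (Suc m)" "0 \<in> S"
proof (cases "0 \<in> S")
  case True
  then have "1 < n" using assms by (auto simp: valid_def)
  then have "n = Suc (Suc (n - 2))" by arith
  then obtain m where "n = Suc (Suc m)" by blast
  then show ?thesis using that True by blast
next
  case False
  then obtain m where "n = Suc m" using assms(2) not0_implies_Suc by blast
  then show ?thesis using that False by blast
qed

lemma layer_0: "valid 0 S \<Longrightarrow> layer_mat d 0 S g = idm 1"
  by (drule valid_0) (simp add: layer_mat_def idm_def fun_eq_iff)
lemma mmul_out: "\<not> (x < D \<and> y < D) \<Longrightarrow> mmul D A B x y = 0"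
  unfolding mmul_def by (rule if_not_P)
lemma layer_out: "\<not> (x < d ^ n \<and> y < d ^ n) \<Longrightarrow> layer_mat d n S g x y = 0"
  unfolding layer_mat_def by (rule if_not_P)

lemma layer_mult:
  assumes "0 < d" "valid n S"
  shows "mmul (d ^ n) (layer_mat d n S g) (layer_mat d n S h)
       = layer_mat d n S (\<lambda>s. mmul (d ^ 2) (g s) (h s))"
  using assms(2)
proof (induction n arbitrary: S g h rule: less_induct)
  case (less n)
  show ?case
  proof (intro ext)
    fix x y
    show "mmul (d ^ n) (layer_mat d n S g) (layer_mat d n S h) x y
        = layer_mat d n S (\<lambda>s. mmul (d ^ 2) (g s) (h s)) x y"
    proof (cases "x < d ^ n \<and> y < d ^ n")
      case False then show ?thesis by (simp only: mmul_out[OF False] layer_out[OF False])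
    next
      case True
      then have xy: "x < d ^ n" "y < d ^ n" by auto
      show ?thesis
      proof (cases "n = 0")
        case True
        then show ?thesis using less.prems xy
          by (simp add: layer_0 mmul_def idm_def)
      next
        case False
        from valid_cases[OF less.prems False] show ?thesis
        proof cases
          case (1 m)
          define S' where "S' = {s. Suc s \<in> S}"
          have v: "valid m S'" using valid_Suc less.prems 1 by (simp add: S'_def)
          let ?L = "\<lambda>g. layer_mat d m S' (\<lambda>s. g (Suc s))"
          have zl: "a + d * w < d ^ n" if "a < d" "w < d ^ m" for a w
            using lt_split[OF that] 1 by simp
          have "mmul (d ^ n) (layer_mat d n S g) (layer_mat d n S h) x y
              = (\<Sum>z<d * d ^ m. layer_mat d n S g x z * layer_mat d n S h z y)"
            using xy 1 by (simp add: mmul_def)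
          also have "\<dots> = (\<Sum>a<d. \<Sum>w<d ^ m. layer_mat d n S g x (a + d * w) * layer_mat d n S h (a + d * w) y)"
            by (rule sum_split_mult[OF assms(1)])
          also have "\<dots> = (\<Sum>a<d. \<Sum>w<d ^ m. (if x mod d = a \<and> a = y mod d then 1 else 0) *
                          (?L g (x div d) w * ?L h w (y div d)))"
          proof (intro sum.cong refl)
            fix a w assume "a \<in> {..<d}" "w \<in> {..<d ^ m}"
            then have aw: "a < d" "w < d ^ m" by auto
            show "layer_mat d n S g x (a + d * w) * layer_mat d n S h (a + d * w) y
               = (if x mod d = a \<and> a = y mod d then 1 else 0) * (?L g (x div d) w * ?L h w (y div d))"
              using layer_dec1[OF assms(1), where m=m and S=S and g=g and x=x and y="a + d * w"] layer_dec1[OF assms(1), where m=m and S=S and g=h and x="a + d * w" and y=y]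
                less.prems 1 xy zl[OF aw] aw by (simp add: S'_def)
          qed
          also have "\<dots> = (\<Sum>a<d. if a = x mod d then (if x mod d = y mod d then 1 else 0) *
                          (\<Sum>w<d ^ m. ?L g (x div d) w * ?L h w (y div d)) else 0)"
            by (intro sum.cong refl) (auto simp: sum_distrib_left)
          also have "\<dots> = (if x mod d = y mod d then 1 else 0) *
                          (\<Sum>w<d ^ m. ?L g (x div d) w * ?L h w (y div d))"
            using assms(1) by (subst sum.delta) simp_all
          also have "(\<Sum>w<d ^ m. ?L g (x div d) w * ?L h w (y div d))
                   = mmul (d ^ m) (?L g) (?L h) (x div d) (y div d)"
            using xy 1 div_lt_pow by (simp add: mmul_def)
          also have "\<dots> = ?L (\<lambda>s. mmul (d ^ 2) (g s) (h s)) (x div d) (y div d)"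
            using less.IH[of m S' "\<lambda>s. g (Suc s)" "\<lambda>s. h (Suc s)"] v 1 by simp
          also have "(if x mod d = y mod d then 1 else 0) * \<dots>
                   = layer_mat d n S (\<lambda>s. mmul (d ^ 2) (g s) (h s)) x y"
            using layer_dec1[OF assms(1), where m=m and S=S and x=x and y=y] less.prems 1 xy by (simp add: S'_def)
          finally show ?thesis .
        next
          case (2 m)
          define S' where "S' = {s. Suc (Suc s) \<in> S}"
          have v: "valid m S'" using valid_SucSuc less.prems 2 by (simp add: S'_def)
          let ?L = "\<lambda>g. layer_mat d m S' (\<lambda>s. g (Suc (Suc s)))"
          have zl: "a + d * (b + d * w) < d ^ n" if "a < d" "b < d" "w < d ^ m" for a b w
            using lt_split[OF that(1) lt_split[OF that(2,3)]] 2 by simp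
          have pz: "pair_idx d 0 (a + d * (b + d * w)) = a * d + b" if "a < d" "b < d" for a b w
            using that by (simp add: pair_idx_0)
          have dz: "(a + d * (b + d * w)) div d div d = w" if "a < d" "b < d" for a b w
            using that by simp
          have "mmul (d ^ n) (layer_mat d n S g) (layer_mat d n S h) x y
              = (\<Sum>z<d * (d * d ^ m). layer_mat d n S g x z * layer_mat d n S h z y)"
            using xy 2 by (simp add: mmul_def)
          also have "\<dots> = (\<Sum>a<d. \<Sum>z1<d * d ^ m. layer_mat d n S g x (a + d * z1) * layer_mat d n S h (a + d * z1) y)"
            by (rule sum_split_mult[OF assms(1)])
          also have "\<dots> = (\<Sum>a<d. \<Sum>b<d. \<Sum>w<d ^ m. layer_mat d n S g x (a + d * (b + d * w)) * layer_mat d n S h (a + d * (b + d * w)) y)"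
            by (intro sum.cong refl sum_split_mult[OF assms(1)])
          also have "\<dots> = (\<Sum>a<d. \<Sum>b<d. \<Sum>w<d ^ m.
                 (g 0 (pair_idx d 0 x) (a * d + b) * h 0 (a * d + b) (pair_idx d 0 y)) *
                 (?L g (x div d div d) w * ?L h w (y div d div d)))"
          proof (intro sum.cong refl)
            fix a b w assume "a \<in> {..<d}" "b \<in> {..<d}" "w \<in> {..<d ^ m}"
            then have abw: "a < d" "b < d" "w < d ^ m" by auto
            show "layer_mat d n S g x (a + d * (b + d * w)) * layer_mat d n S h (a + d * (b + d * w)) y
               = (g 0 (pair_idx d 0 x) (a * d + b) * h 0 (a * d + b) (pair_idx d 0 y)) *
                 (?L g (x div d div d) w * ?L h w (y div d div d))"
              using layer_dec2[OF assms(1), where m=m and S=S and g=g and x=x and y="a + d * (b + d * w)"]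
                layer_dec2[OF assms(1), where m=m and S=S and g=h and x="a + d * (b + d * w)" and y=y]
                less.prems 2 xy zl[OF abw] pz[OF abw(1,2)] dz[OF abw(1,2)]
              by (simp add: S'_def)
          qed
          also have "\<dots> = (\<Sum>a<d. \<Sum>b<d. g 0 (pair_idx d 0 x) (a * d + b) * h 0 (a * d + b) (pair_idx d 0 y)) *
                 (\<Sum>w<d ^ m. ?L g (x div d div d) w * ?L h w (y div d div d))"
          proof -
            have "\<And>u v. (u::complex) * v = u * v" by simp
            show ?thesis
              unfolding sum_distrib_right
              by (intro sum.cong refl) (simp add: sum_distrib_left)
          qed
          also have "(\<Sum>a<d. \<Sum>b<d. g 0 (pair_idx d 0 x) (a * d + b) * h 0 (a * d + b) (pair_idx d 0 y))
                   = mmul (d ^ 2) (g 0) (h 0) (pair_idx d 0 x) (pair_idx d 0 y)"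
            using pair_idx_lt[OF assms(1)] by (simp add: mmul_def sum_pairs[OF assms(1)])
          also have "(\<Sum>w<d ^ m. ?L g (x div d div d) w * ?L h w (y div d div d))
                   = mmul (d ^ m) (?L g) (?L h) (x div d div d) (y div d div d)"
          proof -
            have "x div d div d < d ^ m" "y div d div d < d ^ m"
              using xy 2 div_lt_pow by blast+
            then show ?thesis by (simp add: mmul_def)
          qed
          also have "\<dots> = ?L (\<lambda>s. mmul (d ^ 2) (g s) (h s)) (x div d div d) (y div d div d)"
            using less.IH[of m S' "\<lambda>s. g (Suc (Suc s))" "\<lambda>s. h (Suc (Suc s))"] v 2 by simp
          also have "mmul (d ^ 2) (g 0) (h 0) (pair_idx d 0 x) (pair_idx d 0 y) * \<dots>
                   = layer_mat d n S (\<lambda>s. mmul (d ^ 2) (g s) (h s)) x y"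
            using layer_dec2[OF assms(1), where m=m and S=S and x=x and y=y] less.prems 2 xy by (simp add: S'_def)
          finally show ?thesis .
        qed
      qed
    qed
  qed
qed

lemma pair_eq_iff:
  assumes "0 < d" "b < d" "b' < (d::nat)"
  shows "a * d + b = a' * d + b' \<longleftrightarrow> a = a' \<and> b = b'"
proof
  assume h: "a * d + b = a' * d + b'"
  have "b = (a * d + b) mod d" using assms by simp
  also have "\<dots> = b'" using h assms by simp
  finally have "b = b'" .
  then show "a = a' \<and> b = b'" using h assms by simp
qed simp

lemma nat_eq_dec: "(x::nat) = y \<longleftrightarrow> x mod d = y mod d \<and> x div d = y div d"
  by (metis div_mult_mod_eq)

lemma layer_idm:
  assumes "0 < d" "valid n S"
  shows "layer_mat d n S (\<lambda>_. idm (d ^ 2)) = idm (d ^ n)"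
  using assms(2)
proof (induction n arbitrary: S rule: less_induct)
  case (less n)
  show ?case
  proof (intro ext)
    fix x y
    show "layer_mat d n S (\<lambda>_. idm (d ^ 2)) x y = idm (d ^ n) x y"
    proof (cases "x < d ^ n \<and> y < d ^ n")
      case False then show ?thesis by (simp only: layer_out[OF False]) (use False in \<open>auto simp: idm_def\<close>)
    next
      case True
      then have xy: "x < d ^ n" "y < d ^ n" by auto
      show ?thesis
      proof (cases "n = 0")
        case True
        then show ?thesis using less.prems by (simp add: layer_0)
      next
        case False
        from valid_cases[OF less.prems False] show ?thesis
        proof cases
          case (1 m)
          define S' where "S' = {s. Suc s \<in> S}"
          have v: "valid m S'" using valid_Suc less.prems 1 by (simp add: S'_def)
          have x1: "x div d < d ^ m" "y div d < d ^ m" using xy 1 div_lt_pow by blast+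
          have "layer_mat d n S (\<lambda>_. idm (d ^ 2)) x y = (if x mod d = y mod d then 1 else 0) *
                 layer_mat d m S' (\<lambda>_. idm (d ^ 2)) (x div d) (y div d)"
            using layer_dec1[OF assms(1), where m=m and S=S and x=x and y=y] less.prems 1 xy by (simp add: S'_def)
          also have "\<dots> = (if x mod d = y mod d then 1 else 0) * idm (d ^ m) (x div d) (y div d)"
            using less.IH[of m S'] v 1 by simp
          also have "\<dots> = idm (d ^ n) x y"
            using x1 xy nat_eq_dec[of x y d] by (simp add: idm_def)
          finally show ?thesis .
        next
          case (2 m)
          define S' where "S' = {s. Suc (Suc s) \<in> S}"
          have v: "valid m S'" using valid_SucSuc less.prems 2 by (simp add: S'_def)
          have x1: "x div d div d < d ^ m" "y div d div d < d ^ m" using xy 2 div_lt_pow by blast+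
          have "layer_mat d n S (\<lambda>_. idm (d ^ 2)) x y = idm (d ^ 2) (pair_idx d 0 x) (pair_idx d 0 y) *
                 layer_mat d m S' (\<lambda>_. idm (d ^ 2)) (x div d div d) (y div d div d)"
            using layer_dec2[OF assms(1), where m=m and S=S and x=x and y=y] less.prems 2 xy by (simp add: S'_def)
          also have "\<dots> = idm (d ^ 2) (pair_idx d 0 x) (pair_idx d 0 y) * idm (d ^ m) (x div d div d) (y div d div d)"
            using less.IH[of m S'] v 2 by simp
          also have "idm (d ^ 2) (pair_idx d 0 x) (pair_idx d 0 y)
              = (if x mod d = y mod d \<and> x div d mod d = y div d mod d then 1 else 0)"
          proof -
            have p: "pair_idx d 0 x < d ^ 2" "pair_idx d 0 y < d ^ 2" by (rule pair_idx_lt[OF assms(1)])+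
            have "idm (d ^ 2) (pair_idx d 0 x) (pair_idx d 0 y) = (if pair_idx d 0 x = pair_idx d 0 y then 1 else 0)"
              using p by (simp add: idm_def)
            moreover have "pair_idx d 0 x = pair_idx d 0 y \<longleftrightarrow> x mod d = y mod d \<and> x div d mod d = y div d mod d"
              unfolding pair_idx_0 using pair_eq_iff[OF assms(1), of "x div d mod d" "y div d mod d" "x mod d" "y mod d"] assms(1)
              by simp
            ultimately show ?thesis by simp
          qed
          also have "(if x mod d = y mod d \<and> x div d mod d = y div d mod d then 1 else 0) * idm (d ^ m) (x div d div d) (y div d div d)
               = idm (d ^ n) x y"
          proof -
            have e: "x = y \<longleftrightarrow> (x mod d = y mod d \<and> x div d mod d = y div d mod d) \<and> x div d div d = y div d div d"
              using nat_eq_dec[of x y d] nat_eq_dec[of "x div d" "y div d" d] by simp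
            show ?thesis unfolding idm_def using x1 xy by (simp only: e) simp
          qed
          finally show ?thesis .
        qed
      qed
    qed
  qed
qed

lemma layer_cong:
  assumes "\<And>s. s \<in> S \<Longrightarrow> g s = g' s"
  shows "layer_mat d n S g = layer_mat d n S g'"
proof -
  have "(\<Prod>s\<in>S. g s (pair_idx d s x) (pair_idx d s y)) = (\<Prod>s\<in>S. g' s (pair_idx d s x) (pair_idx d s y))" for x y
    using assms by (intro prod.cong) auto
  then show ?thesis unfolding layer_mat_def by (simp only:)
qed

lemma layer_adj: "adj (layer_mat d n S g) = layer_mat d n S (\<lambda>s. adj (g s))"
proof (intro ext)
  fix x y
  show "adj (layer_mat d n S g) x y = layer_mat d n S (\<lambda>s. adj (g s)) x y"
  proof (cases "x < d ^ n \<and> y < d ^ n")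
    case False
    then have F2: "\<not> (y < d ^ n \<and> x < d ^ n)" by auto
    show ?thesis unfolding adj_def by (simp only: layer_out[OF False] layer_out[OF F2] complex_cnj_zero)
  next
    case True
    have 1: "cnj (\<Prod>s\<in>S. g s (pair_idx d s y) (pair_idx d s x)) = (\<Prod>s\<in>S. adj (g s) (pair_idx d s x) (pair_idx d s y))"
      by (simp add: adj_def)
    have 2: "cnj (\<Prod>k\<in>unc n S. (if dig d k y = dig d k x then 1 else 0))
           = (\<Prod>k\<in>unc n S. (if dig d k x = dig d k y then 1 else (0::complex)))"
      unfolding cnj_prod by (intro prod.cong refl) auto
    show ?thesis using True 1 2 unfolding adj_def layer_mat_unc by simp
  qed
qed


lemma layer_unitary:
  assumes "0 < d" "valid n S" "\<And>s. s \<in> S \<Longrightarrow> g s \<in> unitary_group (d ^ 2)"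
  shows "layer_mat d n S g \<in> unitary_group (d ^ n)"
proof -
  have a: "mmul (d ^ 2) (adj (g s)) (g s) = idm (d ^ 2)" "mmul (d ^ 2) (g s) (adj (g s)) = idm (d ^ 2)"
    if "s \<in> S" for s using assms(3)[OF that] by (simp_all add: unitary_group_def)
  have "mmul (d ^ n) (adj (layer_mat d n S g)) (layer_mat d n S g) = layer_mat d n S (\<lambda>_. idm (d ^ 2))"
    unfolding layer_adj layer_mult[OF assms(1,2)] by (rule layer_cong) (rule a(1))
  moreover have "mmul (d ^ n) (layer_mat d n S g) (adj (layer_mat d n S g)) = layer_mat d n S (\<lambda>_. idm (d ^ 2))"
    unfolding layer_adj layer_mult[OF assms(1,2)] by (rule layer_cong) (rule a(2))
  moreover have "\<forall>i j. \<not> (i < d ^ n \<and> j < d ^ n) \<longrightarrow> layer_mat d n S g i j = 0"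
    using layer_out by blast
  ultimately show ?thesis using layer_idm[OF assms(1,2)] unfolding unitary_group_def by simp
qed

lemma int_pmf_sum:
  fixes f :: "'a \<Rightarrow> complex"
  assumes "finite A" "set_pmf p \<subseteq> A"
  shows "(\<integral>x. f x \<partial>measure_pmf p) = (\<Sum>a\<in>A. of_real (pmf p a) * f a)"
  using assms by (subst integral_measure_pmf[of A]) (auto simp: scaleR_conv_of_real)

lemma int_pair:
  fixes f g :: "'a \<Rightarrow> complex"
  assumes "finite (set_pmf p)" "finite (set_pmf q)"
  shows "(\<integral>x. f (fst x) * g (snd x) \<partial>measure_pmf (pair_pmf p q))
       = (\<integral>x. f x \<partial>measure_pmf p) * (\<integral>x. g x \<partial>measure_pmf q)"
proof -
  have "(\<integral>x. f (fst x) * g (snd x) \<partial>measure_pmf (pair_pmf p q))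
      = (\<Sum>x\<in>set_pmf p \<times> set_pmf q. of_real (pmf (pair_pmf p q) x) * (f (fst x) * g (snd x)))"
    using assms by (intro int_pmf_sum) auto
  also have "\<dots> = (\<Sum>a\<in>set_pmf p. \<Sum>b\<in>set_pmf q. (of_real (pmf p a) * f a) * (of_real (pmf q b) * g b))"
    by (subst sum.cartesian_product) (intro sum.cong refl, auto simp: pmf_pair mult_ac)
  also have "\<dots> = (\<Sum>a\<in>set_pmf p. of_real (pmf p a) * f a) * (\<Sum>b\<in>set_pmf q. of_real (pmf q b) * g b)"
    by (simp add: sum_product)
  also have "\<dots> = (\<integral>x. f x \<partial>measure_pmf p) * (\<integral>x. g x \<partial>measure_pmf q)"
    using assms by (simp add: int_pmf_sum)
  finally show ?thesis .
qed

lemma moment_conv: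
  assumes "0 < D" "finite (set_pmf p)" "finite (set_pmf q)" "r < D ^ (2 * t)" "c < D ^ (2 * t)"
  shows "moment_op (measure_pmf (conv D p q)) D t r c
       = (\<Sum>k<D ^ (2 * t). moment_op (measure_pmf p) D t r k * moment_op (measure_pmf q) D t k c)"
proof -
  have "moment_op (measure_pmf (conv D p q)) D t r c
      = (\<integral>x. tens_entry D t (mmul D (fst x) (snd x)) r c \<partial>measure_pmf (pair_pmf p q))"
    using assms by (simp add: moment_op_def conv_def split_beta)
  also have "\<dots> = (\<integral>x. (\<Sum>k<D ^ (2 * t). tens_entry D t (fst x) r k * tens_entry D t (snd x) k c) \<partial>measure_pmf (pair_pmf p q))"
    by (simp add: tens_mmul[OF assms(1)])
  also have "\<dots> = (\<Sum>k<D ^ (2 * t). \<integral>x. tens_entry D t (fst x) r k * tens_entry D t (snd x) k c \<partial>measure_pmf (pair_pmf p q))"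
    using assms by (subst Bochner_Integration.integral_sum) (auto intro!: integrable_measure_pmf_finite)
  also have "\<dots> = (\<Sum>k<D ^ (2 * t). moment_op (measure_pmf p) D t r k * moment_op (measure_pmf q) D t k c)"
  proof (rule sum.cong[OF refl])
    fix k assume "k \<in> {..<D ^ (2 * t)}"
    then show "(\<integral>x. tens_entry D t (fst x) r k * tens_entry D t (snd x) k c \<partial>measure_pmf (pair_pmf p q))
       = moment_op (measure_pmf p) D t r k * moment_op (measure_pmf q) D t k c"
      using assms int_pair[OF assms(2,3), of "\<lambda>U. tens_entry D t U r k" "\<lambda>U. tens_entry D t U k c"]
      by (simp add: moment_op_def)
  qed
  finally show ?thesis .
qed

lemma pmf_mix: "pmf (bind_pmf (bernoulli_pmf (1/2)) (\<lambda>b. if b then p else q)) x = pmf p x / 2 + pmf q x / 2"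
  by (simp add: pmf_bind)

lemma set_mix: "set_pmf (bind_pmf (bernoulli_pmf (1/2)) (\<lambda>b. if b then p else q)) = set_pmf p \<union> set_pmf q"
  by (auto split: if_splits)

lemma int_mix:
  fixes f :: "'a \<Rightarrow> complex"
  assumes "finite (set_pmf p)" "finite (set_pmf q)"
  shows "(\<integral>x. f x \<partial>measure_pmf (bind_pmf (bernoulli_pmf (1/2)) (\<lambda>b. if b then p else q)))
       = (\<integral>x. f x \<partial>measure_pmf p) / 2 + (\<integral>x. f x \<partial>measure_pmf q) / 2"
proof -
  let ?A = "set_pmf p \<union> set_pmf q"
  have "(\<integral>x. f x \<partial>measure_pmf (bind_pmf (bernoulli_pmf (1/2)) (\<lambda>b. if b then p else q)))
      = (\<Sum>a\<in>?A. of_real (pmf p a / 2 + pmf q a / 2) * f a)"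
    using assms by (subst int_pmf_sum[of ?A]) (auto simp: pmf_mix split: if_splits)
  also have "\<dots> = (\<Sum>a\<in>?A. of_real (pmf p a) * f a) / 2 + (\<Sum>a\<in>?A. of_real (pmf q a) * f a) / 2"
    by (simp add: sum_divide_distrib sum.distrib[symmetric] algebra_simps)
  also have "\<dots> = (\<integral>x. f x \<partial>measure_pmf p) / 2 + (\<integral>x. f x \<partial>measure_pmf q) / 2"
    using assms by (simp add: int_pmf_sum[of ?A])
  finally show ?thesis .
qed

lemma moment_mix:
  assumes "finite (set_pmf p)" "finite (set_pmf q)"
  shows "moment_op (measure_pmf (bind_pmf (bernoulli_pmf (1/2)) (\<lambda>b. if b then p else q))) D t r c
       = moment_op (measure_pmf p) D t r c / 2 + moment_op (measure_pmf q) D t r c / 2"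
  using assms by (simp add: moment_op_def int_mix)

lemma fin_conv: "finite (set_pmf p) \<Longrightarrow> finite (set_pmf q) \<Longrightarrow> finite (set_pmf (conv D p q))"
  by (simp add: conv_def)

lemma fin_mix: "finite (set_pmf p) \<Longrightarrow> finite (set_pmf q) \<Longrightarrow>
   finite (set_pmf (bind_pmf (bernoulli_pmf (1/2)) (\<lambda>b. if b then p else q)))"
  by (simp add: set_mix)

lemma fin_layer: "finite S \<Longrightarrow> finite (set_pmf p) \<Longrightarrow> finite (set_pmf (layer_pmf d n S p))"
  unfolding layer_pmf_def by (simp add: set_Pi_pmf finite_PiE_dflt)

lemma set_conv: "set_pmf (conv D p q) = (\<lambda>(U, V). mmul D U V) ` (set_pmf p \<times> set_pmf q)"
  by (simp add: conv_def)

lemma set_layer: "finite S \<Longrightarrow> set_pmf (layer_pmf d n S p) = layer_mat d n S ` PiE_dflt S (\<lambda>_ _. 0) (\<lambda>_. set_pmf p)"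
  unfolding layer_pmf_def by (simp add: set_Pi_pmf comp_def)

lemma layer_pmf_conv:
  assumes "0 < d" "valid n S"
  shows "layer_pmf d n S (conv (d ^ 2) p q) = conv (d ^ n) (layer_pmf d n S p) (layer_pmf d n S q)"
proof -
  have fS: "finite S" using valid_finite[OF assms(2)] .
  let ?P = "Pi_pmf S (\<lambda>_ _. 0) (\<lambda>_. p)" and ?Q = "Pi_pmf S (\<lambda>_ _. 0) (\<lambda>_. q)"
  have "Pi_pmf S (\<lambda>_ _. 0) (\<lambda>_. conv (d ^ 2) p q)
      = Pi_pmf S (\<lambda>_ _. 0) (\<lambda>_. bind_pmf p (\<lambda>a. bind_pmf q (\<lambda>b. return_pmf (mmul (d ^ 2) a b))))"
    by (simp add: conv_def pair_pmf_def map_bind_pmf)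
  also have "\<dots> = bind_pmf ?P (\<lambda>f. Pi_pmf S (\<lambda>_ _. 0) (\<lambda>x. bind_pmf q (\<lambda>b. return_pmf (mmul (d ^ 2) (f x) b))))"
    by (rule Pi_pmf_bind[OF fS])
  also have "\<dots> = bind_pmf ?P (\<lambda>f. bind_pmf ?Q (\<lambda>h. Pi_pmf S (\<lambda>_ _. 0) (\<lambda>x. return_pmf (mmul (d ^ 2) (f x) (h x)))))"
    by (intro bind_pmf_cong refl Pi_pmf_bind[OF fS])
  also have "\<dots> = bind_pmf ?P (\<lambda>f. bind_pmf ?Q (\<lambda>h. return_pmf (\<lambda>x. if x \<in> S then mmul (d ^ 2) (f x) (h x) else (\<lambda>_ _. 0))))"
    using fS by simp
  finally have 1: "Pi_pmf S (\<lambda>_ _. 0) (\<lambda>_. conv (d ^ 2) p q) = \<dots>" .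
  have "layer_pmf d n S (conv (d ^ 2) p q)
      = bind_pmf ?P (\<lambda>f. bind_pmf ?Q (\<lambda>h. return_pmf (layer_mat d n S (\<lambda>x. if x \<in> S then mmul (d ^ 2) (f x) (h x) else (\<lambda>_ _. 0)))))"
    unfolding layer_pmf_def 1 by (simp add: map_bind_pmf)
  also have "\<dots> = bind_pmf ?P (\<lambda>f. bind_pmf ?Q (\<lambda>h. return_pmf (mmul (d ^ n) (layer_mat d n S f) (layer_mat d n S h))))"
    by (intro bind_pmf_cong refl arg_cong[where f=return_pmf])
       (subst layer_mult[OF assms], rule layer_cong, simp)
  also have "\<dots> = conv (d ^ n) (layer_pmf d n S p) (layer_pmf d n S q)"
    by (simp add: conv_def pair_pmf_def layer_pmf_def map_bind_pmf bind_map_pmf)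
  finally show ?thesis .
qed

lemma cont_entry: "continuous_on UNIV (\<lambda>U::cmat. U i j)"
proof -
  have "continuous_on UNIV (\<lambda>U::cmat. U i)" by simp
  then show ?thesis by (rule continuous_on_product_then_coordinatewise)
qed

lemma cont_tens: "continuous_on UNIV (\<lambda>U. tens_entry D t U r c)"
  unfolding tens_entry_def
  by (intro continuous_intros cont_entry)

lemma meas_tens: "(\<lambda>U. tens_entry D t U r c) \<in> borel_measurable borel"
  by (rule borel_measurable_continuous_onI[OF cont_tens])

lemma cont_mmul: "continuous_on UNIV (\<lambda>U. mmul D V U)"
proof (intro continuous_on_coordinatewise_then_product)
  fix i j
  show "continuous_on UNIV (\<lambda>U. mmul D V U i j)"
  proof (cases "i < D \<and> j < D")
    case True then show ?thesis by (simp add: mmul_def continuous_intros cont_entry)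
  next
    case False then show ?thesis unfolding mmul_def by (simp only: if_not_P[OF False] if_False continuous_on_const)
  qed
qed

lemma meas_mmul: "(\<lambda>U. mmul D V U) \<in> borel_measurable borel"
  by (rule borel_measurable_continuous_onI[OF cont_mmul])


lemma unitary_entry_le:
  assumes "U \<in> unitary_group D"
  shows "cmod (U i j) \<le> 1"
proof (cases "i < D \<and> j < D")
  case False then show ?thesis using assms by (simp add: unitary_group_def)
next
  case True
  have "mmul D (adj U) U j j = idm D j j" using assms by (simp add: unitary_group_def)
  then have "(\<Sum>k<D. cnj (U k j) * U k j) = 1" using True by (simp add: mmul_def adj_def idm_def)
  moreover have "cnj (U k j) * U k j = complex_of_real ((cmod (U k j))\<^sup>2)" for k
    by (simp add: complex_norm_square mult.commute del: of_real_power)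
  ultimately have "(\<Sum>k<D. complex_of_real ((cmod (U k j))\<^sup>2)) = 1"
    by simp
  then have s: "(\<Sum>k<D. (cmod (U k j))\<^sup>2) = 1"
    by (metis of_real_eq_1_iff of_real_sum)
  have "(cmod (U i j))\<^sup>2 \<le> (\<Sum>k<D. (cmod (U k j))\<^sup>2)"
    using True by (intro member_le_sum) auto
  then have "(cmod (U i j))\<^sup>2 \<le> 1" using s by simp
  then show ?thesis by (simp add: power_le_one_iff abs_le_square_iff)
qed

lemma tens_le_1:
  assumes "U \<in> unitary_group D"
  shows "cmod (tens_entry D t U r c) \<le> 1"
  unfolding tens_as_prod prod_norm[symmetric]
  by (intro prod_le_1) (auto simp: unitary_entry_le[OF assms])

locale haar_ctx =
  fixes D :: nat and \<mu> :: "cmat measure" and t :: nat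
  assumes haar: "is_haar D \<mu>" and Dpos: "0 < D"
begin

abbreviation "N \<equiv> D ^ (2 * t)"
abbreviation "P \<equiv> moment_op \<mu> D t"

lemma ps: "prob_space \<mu>" using haar by (simp add: is_haar_def)
lemma sets_mu: "sets \<mu> = sets borel" using haar by (simp add: is_haar_def)

lemma meas_mu: "f \<in> borel_measurable borel \<Longrightarrow> f \<in> borel_measurable \<mu>"
  using sets_mu measurable_cong_sets by blast

lemma AE_unitary: "AE U in \<mu>. U \<in> unitary_group D"
proof -
  have "unitary_group D \<in> sets \<mu>" "emeasure \<mu> (unitary_group D) = 1" using haar by (auto simp: is_haar_def)
  then show ?thesis using prob_space.AE_in_set_eq_1[OF ps] by (simp add: measure_def)
qed

lemma integrable_tens: "integrable \<mu> (\<lambda>U. tens_entry D t U r c)"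
proof -
  interpret prob_space \<mu> by (rule ps)
  show ?thesis
    by (rule integrable_const_bound[where B=1])
       (use AE_unitary tens_le_1 in \<open>auto elim: AE_mp intro: meas_mu meas_tens\<close>)
qed

lemma invariance:
  assumes "V \<in> unitary_group D" "f \<in> borel_measurable borel"
  shows "(\<integral>U. f (mmul D V U) \<partial>\<mu>) = (\<integral>U. (f U :: complex) \<partial>\<mu>)"
proof -
  have "distr \<mu> borel (\<lambda>U. mmul D V U) = \<mu>" using haar assms(1) by (simp add: is_haar_def)
  then have "(\<integral>U. f U \<partial>\<mu>) = (\<integral>U. f U \<partial>(distr \<mu> borel (\<lambda>U. mmul D V U)))" by simp
  also have "\<dots> = (\<integral>U. f (mmul D V U) \<partial>\<mu>)"
    by (rule integral_distr[OF meas_mu[OF meas_mmul] assms(2)])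
  finally show ?thesis by simp
qed

lemma left_inv:
  assumes "V \<in> unitary_group D" "r < N" "c < N"
  shows "(\<Sum>k<N. tens_entry D t V r k * P k c) = P r c"
proof -
  have "(\<Sum>k<N. tens_entry D t V r k * P k c) = (\<Sum>k<N. \<integral>U. tens_entry D t V r k * tens_entry D t U k c \<partial>\<mu>)"
    using assms by (intro sum.cong refl) (simp add: moment_op_def)
  also have "\<dots> = (\<integral>U. (\<Sum>k<N. tens_entry D t V r k * tens_entry D t U k c) \<partial>\<mu>)"
    by (rule Bochner_Integration.integral_sum[symmetric]) (simp add: integrable_tens)
  also have "\<dots> = (\<integral>U. tens_entry D t (mmul D V U) r c \<partial>\<mu>)"
    by (simp add: tens_mmul[OF Dpos])
  also have "\<dots> = (\<integral>U. tens_entry D t U r c \<partial>\<mu>)"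
    by (rule invariance[OF assms(1) meas_tens])
  also have "\<dots> = P r c" using assms by (simp add: moment_op_def)
  finally show ?thesis .
qed

end

definition cin :: "nat \<Rightarrow> (nat \<Rightarrow> complex) \<Rightarrow> (nat \<Rightarrow> complex) \<Rightarrow> complex" where
  "cin N a b = (\<Sum>i<N. cnj (a i) * b i)"

definition nsq :: "nat \<Rightarrow> (nat \<Rightarrow> complex) \<Rightarrow> real" where
  "nsq N a = (\<Sum>i<N. (cmod (a i))\<^sup>2)"

lemma cin_self: "cin N a a = of_real (nsq N a)"
  unfolding cin_def nsq_def of_real_sum
  by (intro sum.cong refl) (simp add: complex_norm_square mult.commute del: of_real_power)

lemma cin_cnj: "cnj (cin N a b) = cin N b a"
  by (simp add: cin_def mult.commute)

lemma cin_cong: "(\<And>i. i < N \<Longrightarrow> a i = a' i) \<Longrightarrow> (\<And>i. i < N \<Longrightarrow> b i = b' i) \<Longrightarrow> cin N a b = cin N a' b'"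
  unfolding cin_def by (intro sum.cong) auto

lemma nsq_nonneg: "0 \<le> nsq N a" by (simp add: nsq_def sum_nonneg)

lemma cin_diff: "cin N (\<lambda>i. a i - b i) (\<lambda>i. a i - b i) = cin N a a - cin N a b - cin N b a + cin N b b"
  unfolding cin_def by (simp add: algebra_simps sum.distrib sum_subtractf)

lemma tens_isometry:
  assumes "0 < D" "U \<in> unitary_group D"
  shows "cin (D ^ (2 * t)) (mvmul (D ^ (2 * t)) (tens_entry D t U) a) (mvmul (D ^ (2 * t)) (tens_entry D t U) b)
       = cin (D ^ (2 * t)) a b"
proof -
  let ?N = "D ^ (2 * t)" and ?T = "tens_entry D t U"
  have "cin ?N (mvmul ?N ?T a) (mvmul ?N ?T b) = (\<Sum>i<?N. (\<Sum>j<?N. cnj (?T i j) * cnj (a j)) * (\<Sum>k<?N. ?T i k * b k))"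
    by (simp add: cin_def mvmul_def)
  also have "\<dots> = (\<Sum>i<?N. \<Sum>j<?N. \<Sum>k<?N. cnj (a j) * b k * (cnj (?T i j) * ?T i k))"
    unfolding sum_product by (intro sum.cong refl) (simp add: mult_ac)
  also have "\<dots> = (\<Sum>j<?N. \<Sum>k<?N. \<Sum>i<?N. cnj (a j) * b k * (cnj (?T i j) * ?T i k))"
    by (subst sum.swap) (rule sum.cong[OF refl], rule sum.swap)
  also have "\<dots> = (\<Sum>j<?N. \<Sum>k<?N. cnj (a j) * b k * (if j = k then 1 else 0))"
    by (intro sum.cong refl) (simp add: sum_distrib_left[symmetric] tens_unitary[OF assms])
  also have "\<dots> = (\<Sum>j<?N. cnj (a j) * b j)"
    by (intro sum.cong refl) (simp add: if_distrib cong: if_cong)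
  finally show ?thesis by (simp add: cin_def)
qed


context haar_ctx begin

lemma TP:
  assumes "U \<in> unitary_group D" "i < N"
  shows "mvmul N (tens_entry D t U) (mvmul N P x) i = mvmul N P x i"
proof -
  have "mvmul N (tens_entry D t U) (mvmul N P x) i = (\<Sum>k<N. \<Sum>j<N. tens_entry D t U i k * P k j * x j)"
    by (simp add: mvmul_def sum_distrib_left mult_ac)
  also have "\<dots> = (\<Sum>j<N. (\<Sum>k<N. tens_entry D t U i k * P k j) * x j)"
    by (subst sum.swap) (simp add: sum_distrib_right)
  also have "\<dots> = (\<Sum>j<N. P i j * x j)"
    using left_inv[OF assms(1) assms(2)] by simp
  finally show ?thesis by (simp add: mvmul_def)
qed

lemma integrable_mv: "integrable \<mu> (\<lambda>U. c * mvmul N (tens_entry D t U) x i)"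
  unfolding mvmul_def sum_distrib_left
  by (intro Bochner_Integration.integrable_sum integrable_mult_right integrable_mult_left integrable_tens)

lemma Px_int:
  assumes "i < N"
  shows "mvmul N P x i = (\<integral>U. mvmul N (tens_entry D t U) x i \<partial>\<mu>)"
proof -
  have "mvmul N P x i = (\<Sum>j<N. (\<integral>U. tens_entry D t U i j \<partial>\<mu>) * x j)"
    unfolding mvmul_def using assms by (intro sum.cong refl) (simp add: moment_op_def)
  also have "\<dots> = (\<Sum>j<N. \<integral>U. tens_entry D t U i j * x j \<partial>\<mu>)"
    by simp
  also have "\<dots> = (\<integral>U. (\<Sum>j<N. tens_entry D t U i j * x j) \<partial>\<mu>)"
    by (rule Bochner_Integration.integral_sum[symmetric])
       (intro integrable_mult_left integrable_tens)
  finally show ?thesis by (simp add: mvmul_def)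
qed

lemma PP: "cin N (mvmul N P x) (mvmul N P x) = cin N (mvmul N P x) x"
proof -
  let ?Px = "mvmul N P x"
  have "cin N ?Px ?Px = (\<Sum>i<N. cnj (?Px i) * (\<integral>U. mvmul N (tens_entry D t U) x i \<partial>\<mu>))"
    unfolding cin_def by (intro sum.cong refl) (simp add: Px_int[symmetric])
  also have "\<dots> = (\<Sum>i<N. \<integral>U. cnj (?Px i) * mvmul N (tens_entry D t U) x i \<partial>\<mu>)"
    by simp
  also have "\<dots> = (\<integral>U. cin N ?Px (mvmul N (tens_entry D t U) x) \<partial>\<mu>)"
    unfolding cin_def
    by (rule Bochner_Integration.integral_sum[symmetric]) (rule integrable_mv)
  also have "\<dots> = (\<integral>U. cin N ?Px x \<partial>\<mu>)"
  proof (rule integral_cong_AE)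
    show "(\<lambda>U. cin N ?Px (mvmul N (tens_entry D t U) x)) \<in> borel_measurable \<mu>"
      using integrable_mv unfolding cin_def
      by (intro borel_measurable_sum) (rule borel_measurable_integrable)
    show "(\<lambda>U. cin N ?Px x) \<in> borel_measurable \<mu>" by simp
    show "AE U in \<mu>. cin N ?Px (mvmul N (tens_entry D t U) x) = cin N ?Px x"
      using AE_unitary
    proof (rule AE_mp, intro AE_I2 impI)
      fix U assume U: "U \<in> unitary_group D"
      have "cin N ?Px (mvmul N (tens_entry D t U) x)
          = cin N (mvmul N (tens_entry D t U) ?Px) (mvmul N (tens_entry D t U) x)"
        by (rule cin_cong) (simp_all add: TP[OF U])
      also have "\<dots> = cin N ?Px x" by (rule tens_isometry[OF Dpos U])
      finally show "cin N ?Px (mvmul N (tens_entry D t U) x) = cin N ?Px x" .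
    qed
  qed
  also have "\<dots> = cin N ?Px x"
    using prob_space.prob_space[OF ps] by simp
  finally show ?thesis .
qed

lemma key_bound:
  assumes "U \<in> unitary_group D"
  shows "nsq N (\<lambda>i. mvmul N (tens_entry D t U) x i - mvmul N P x i) \<le> nsq N x"
proof -
  let ?a = "mvmul N (tens_entry D t U) x" and ?b = "mvmul N P x"
  have aa: "cin N ?a ?a = cin N x x" by (rule tens_isometry[OF Dpos assms])
  have ab: "cin N ?a ?b = cin N x ?b"
  proof -
    have "cin N ?a ?b = cin N ?a (mvmul N (tens_entry D t U) ?b)"
      by (rule cin_cong) (simp_all add: TP[OF assms])
    also have "\<dots> = cin N x ?b" by (rule tens_isometry[OF Dpos assms])
    finally show ?thesis .
  qed
  have bb: "cin N ?b ?b = cin N ?b x" by (rule PP)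
  have cb: "cnj (cin N ?b ?b) = cin N ?b ?b" by (simp add: cin_self)
  have xb: "cin N x ?b = cin N ?b ?b"
    by (metis bb cb cin_cnj)
  have "complex_of_real (nsq N (\<lambda>i. ?a i - ?b i)) = cin N (\<lambda>i. ?a i - ?b i) (\<lambda>i. ?a i - ?b i)"
    by (simp add: cin_self)
  also have "\<dots> = cin N x x - cin N ?b ?b"
    unfolding cin_diff aa ab cin_cnj[of N ?a ?b, symmetric] xb bb[symmetric] cb by simp
  also have "\<dots> = complex_of_real (nsq N x - nsq N ?b)"
    by (simp add: cin_self)
  finally have "nsq N (\<lambda>i. ?a i - ?b i) = nsq N x - nsq N ?b"
    using of_real_eq_iff by blast
  then show ?thesis using nsq_nonneg[of N ?b] by simp
qed

end

lemma vnorm_L2: "vnorm N a = L2_set (\<lambda>i. cmod (a i)) {..<N}"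
  by (simp add: vnorm_def L2_set_def)

lemma vnorm_nsq: "vnorm N a = sqrt (nsq N a)"
  by (simp add: vnorm_def nsq_def)

lemma vnorm_cong: "(\<And>i. i < N \<Longrightarrow> a i = b i) \<Longrightarrow> vnorm N a = vnorm N b"
  unfolding vnorm_def by (intro arg_cong[where f=sqrt] sum.cong) auto

lemma vnorm_nonneg: "0 \<le> vnorm N a" by (simp add: vnorm_L2)

lemma vnorm_add: "vnorm N (\<lambda>i. a i + b i) \<le> vnorm N a + vnorm N b"
proof -
  have "vnorm N (\<lambda>i. a i + b i) \<le> L2_set (\<lambda>i. cmod (a i) + cmod (b i)) {..<N}"
    unfolding vnorm_L2 by (intro L2_set_mono norm_triangle_ineq) auto
  also have "\<dots> \<le> vnorm N a + vnorm N b"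
    unfolding vnorm_L2 by (rule L2_set_triangle_ineq)
  finally show ?thesis .
qed

lemma vnorm_scale: "0 \<le> c \<Longrightarrow> vnorm N (\<lambda>i. complex_of_real c * a i) = c * vnorm N a"
  unfolding vnorm_L2 by (simp add: L2_set_right_distrib norm_mult)

lemma vnorm_sum:
  assumes "finite F"
  shows "vnorm N (\<lambda>i. \<Sum>w\<in>F. v w i) \<le> (\<Sum>w\<in>F. vnorm N (v w))"
  using assms
proof (induction rule: finite_induct)
  case empty then show ?case by (simp add: vnorm_def)
next
  case (insert w F)
  have "vnorm N (\<lambda>i. \<Sum>w\<in>insert w F. v w i) = vnorm N (\<lambda>i. v w i + (\<Sum>w\<in>F. v w i))"
    using insert by simp
  also have "\<dots> \<le> vnorm N (v w) + vnorm N (\<lambda>i. \<Sum>w\<in>F. v w i)"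
    by (rule vnorm_add)
  also have "\<dots> \<le> vnorm N (v w) + (\<Sum>w\<in>F. vnorm N (v w))"
    using insert by simp
  finally show ?case using insert by simp
qed

lemma cmod_le_vnorm: "j < N \<Longrightarrow> cmod (x j) \<le> vnorm N x"
  unfolding vnorm_L2 by (rule member_le_L2_set) auto

lemma opnorm_bdd: "bdd_above ((\<lambda>x. vnorm N (mvmul N A x)) ` {x. vnorm N x \<le> 1})"
proof (rule bdd_aboveI2)
  fix x assume "x \<in> {x. vnorm N x \<le> 1}"
  then have x1: "vnorm N x \<le> 1" by simp
  have "vnorm N (mvmul N A x) \<le> (\<Sum>i<N. cmod (mvmul N A x i))"
    unfolding vnorm_L2 by (rule L2_set_le_sum) simp
  also have "\<dots> \<le> (\<Sum>i<N. \<Sum>j<N. cmod (A i j))"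
  proof (rule sum_mono)
    fix i assume "i \<in> {..<N}"
    have "cmod (mvmul N A x i) \<le> (\<Sum>j<N. cmod (A i j * x j))"
      unfolding mvmul_def by (rule norm_sum)
    also have "\<dots> \<le> (\<Sum>j<N. cmod (A i j))"
    proof (rule sum_mono)
      fix j assume "j \<in> {..<N}"
      then have "cmod (x j) \<le> 1" using cmod_le_vnorm[of j N x] x1 by simp
      then show "cmod (A i j * x j) \<le> cmod (A i j)"
        by (simp add: norm_mult mult_left_le)
    qed
    finally show "cmod (mvmul N A x i) \<le> (\<Sum>j<N. cmod (A i j))" .
  qed
  finally show "vnorm N (mvmul N A x) \<le> (\<Sum>i<N. \<Sum>j<N. cmod (A i j))" .
qed

lemma opnorm_upper: "vnorm N x \<le> 1 \<Longrightarrow> vnorm N (mvmul N A x) \<le> opnorm N A"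
  unfolding opnorm_def by (rule cSup_upper) (auto intro: opnorm_bdd)

lemma opnorm_least:
  assumes "\<And>x. vnorm N x \<le> 1 \<Longrightarrow> vnorm N (mvmul N A x) \<le> B"
  shows "opnorm N A \<le> B"
proof -
  have "vnorm N (\<lambda>_. 0) \<le> 1" by (simp add: vnorm_def)
  then show ?thesis unfolding opnorm_def by (intro cSup_least) (auto intro: assms)
qed

context haar_ctx begin

lemma mix_bound:
  assumes "finite (set_pmf \<nu>)" "set_pmf \<nu> \<subseteq> unitary_group D"
  shows "vnorm N (mvmul N (\<lambda>r c. moment_op (measure_pmf \<nu>) D t r c - P r c) x) \<le> vnorm N x"
proof -
  let ?S = "set_pmf \<nu>"
  have eq: "mvmul N (\<lambda>r c. moment_op (measure_pmf \<nu>) D t r c - P r c) x i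
      = (\<Sum>W\<in>?S. complex_of_real (pmf \<nu> W) * (mvmul N (tens_entry D t W) x i - mvmul N P x i))" if "i < N" for i
  proof -
    have M: "moment_op (measure_pmf \<nu>) D t i j = (\<Sum>W\<in>?S. complex_of_real (pmf \<nu> W) * tens_entry D t W i j)" if "j < N" for j
      using that \<open>i < N\<close> assms(1) by (simp add: moment_op_def int_pmf_sum)
    have one: "(\<Sum>W\<in>?S. complex_of_real (pmf \<nu> W)) = 1"
      using sum_pmf_eq_1[OF assms(1) order_refl] by (metis of_real_1 of_real_sum)
    have "mvmul N (\<lambda>r c. moment_op (measure_pmf \<nu>) D t r c - P r c) x i
        = (\<Sum>j<N. (\<Sum>W\<in>?S. complex_of_real (pmf \<nu> W) * tens_entry D t W i j) * x j - P i j * x j)"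
      unfolding mvmul_def by (intro sum.cong refl) (simp add: M algebra_simps)
    also have "\<dots> = (\<Sum>j<N. \<Sum>W\<in>?S. complex_of_real (pmf \<nu> W) * (tens_entry D t W i j * x j - P i j * x j))"
    proof (intro sum.cong refl)
      fix j
      have "(\<Sum>W\<in>?S. complex_of_real (pmf \<nu> W) * (tens_entry D t W i j * x j - P i j * x j))
          = (\<Sum>W\<in>?S. complex_of_real (pmf \<nu> W) * tens_entry D t W i j) * x j
            - (\<Sum>W\<in>?S. complex_of_real (pmf \<nu> W)) * (P i j * x j)"
        by (simp add: right_diff_distrib sum_subtractf sum_distrib_right mult.assoc)
      then show "(\<Sum>W\<in>?S. complex_of_real (pmf \<nu> W) * tens_entry D t W i j) * x j - P i j * x j
          = (\<Sum>W\<in>?S. complex_of_real (pmf \<nu> W) * (tens_entry D t W i j * x j - P i j * x j))"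
        using one by simp
    qed
    also have "\<dots> = (\<Sum>W\<in>?S. complex_of_real (pmf \<nu> W) * (mvmul N (tens_entry D t W) x i - mvmul N P x i))"
      by (subst sum.swap) (intro sum.cong refl, simp add: mvmul_def sum_distrib_left sum_subtractf[symmetric] right_diff_distrib)
    finally show ?thesis .
  qed
  have "vnorm N (mvmul N (\<lambda>r c. moment_op (measure_pmf \<nu>) D t r c - P r c) x)
      = vnorm N (\<lambda>i. \<Sum>W\<in>?S. complex_of_real (pmf \<nu> W) * (mvmul N (tens_entry D t W) x i - mvmul N P x i))"
    by (rule vnorm_cong) (rule eq)
  also have "\<dots> \<le> (\<Sum>W\<in>?S. vnorm N (\<lambda>i. complex_of_real (pmf \<nu> W) * (mvmul N (tens_entry D t W) x i - mvmul N P x i)))"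
    by (rule vnorm_sum[OF assms(1)])
  also have "\<dots> = (\<Sum>W\<in>?S. pmf \<nu> W * vnorm N (\<lambda>i. mvmul N (tens_entry D t W) x i - mvmul N P x i))"
    by (simp add: vnorm_scale)
  also have "\<dots> \<le> (\<Sum>W\<in>?S. pmf \<nu> W * vnorm N x)"
  proof (rule sum_mono)
    fix W assume "W \<in> ?S"
    then have "W \<in> unitary_group D" using assms(2) by auto
    then have "vnorm N (\<lambda>i. mvmul N (tens_entry D t W) x i - mvmul N P x i) \<le> vnorm N x"
      unfolding vnorm_nsq by (intro real_sqrt_le_mono key_bound)
    then show "pmf \<nu> W * vnorm N (\<lambda>i. mvmul N (tens_entry D t W) x i - mvmul N P x i) \<le> pmf \<nu> W * vnorm N x"
      by (intro mult_left_mono) auto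
  qed
  also have "\<dots> = vnorm N x"
    using sum_pmf_eq_1[OF assms(1) order_refl] by (simp add: sum_distrib_right[symmetric])
  finally show ?thesis .
qed

end

lemma supp_layer:
  assumes "0 < d" "valid n S" "set_pmf \<eta> \<subseteq> unitary_group (d ^ 2)"
  shows "set_pmf (layer_pmf d n S \<eta>) \<subseteq> unitary_group (d ^ n)"
proof
  fix W assume "W \<in> set_pmf (layer_pmf d n S \<eta>)"
  then obtain f where f: "f \<in> PiE_dflt S (\<lambda>_ _. 0) (\<lambda>_. set_pmf \<eta>)" and W: "W = layer_mat d n S f"
    using set_layer[OF valid_finite[OF assms(2)]] by auto
  have "f s \<in> unitary_group (d ^ 2)" if "s \<in> S" for s
    using f that assms(3) by (auto simp: PiE_dflt_def)
  then show "W \<in> unitary_group (d ^ n)" unfolding W by (rule layer_unitary[OF assms(1,2)])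
qed

lemma supp_conv:
  assumes "set_pmf p \<subseteq> unitary_group D" "set_pmf q \<subseteq> unitary_group D"
  shows "set_pmf (conv D p q) \<subseteq> unitary_group D"
  using assms by (auto simp: set_conv intro!: unitary_mmul)

lemma valid_even: "valid n {s. even s \<and> s + 1 < n}"
  by (auto simp: valid_def)

lemma valid_odd: "valid n {s. odd s \<and> s + 1 < n}"
  by (auto simp: valid_def)

theorem lemma6:
  fixes d n t :: nat and G :: "cmat set" and \<mu> :: "cmat measure"
  assumes "0 < d" and "even n" and "2 \<le> n"
    and "finite G" and "G \<noteq> {}" and "G \<subseteq> unitary_group (d ^ 2)"
    and "is_haar (d ^ n) \<mu>"
    and "0 < t"
  shows "gap (d ^ n) \<mu>
           (measure_pmf (conv (d ^ n) (nu_par d n (pmf_of_set G))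
                                      (nu_par d n (pmf_of_set (adj ` G))))) t
         \<ge> 1/2 * gap (d ^ n) \<mu>
           (measure_pmf (nu_par d n (conv (d ^ 2) (pmf_of_set G) (pmf_of_set (adj ` G))))) t"
proof -
  define D where "D = d ^ n"
  have Dpos: "0 < D" using assms(1) by (simp add: D_def)
  interpret H: haar_ctx D \<mu> t using assms(7) Dpos by unfold_locales (simp_all add: D_def)
  define Se where "Se = {s. even s \<and> s + 1 < n}"
  define So where "So = {s. odd s \<and> s + 1 < n}"
  have vSe: "valid n Se" unfolding Se_def by (rule valid_even)
  have vSo: "valid n So" unfolding So_def by (rule valid_odd)
  define \<eta>1 where "\<eta>1 = pmf_of_set G"
  define \<eta>2 where "\<eta>2 = pmf_of_set (adj ` G)"
  have s1: "set_pmf \<eta>1 = G" using assms(4,5) by (simp add: \<eta>1_def)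
  have s2: "set_pmf \<eta>2 = adj ` G" using assms(4,5) by (simp add: \<eta>2_def)
  have f1: "finite (set_pmf \<eta>1)" and f2: "finite (set_pmf \<eta>2)" using s1 s2 assms(4) by auto
  have u1: "set_pmf \<eta>1 \<subseteq> unitary_group (d ^ 2)" using s1 assms(6) by simp
  have u2: "set_pmf \<eta>2 \<subseteq> unitary_group (d ^ 2)" using s2 assms(6) unitary_adj by auto
  define Le1 where "Le1 = layer_pmf d n Se \<eta>1"
  define Lo1 where "Lo1 = layer_pmf d n So \<eta>1"
  define Le2 where "Le2 = layer_pmf d n Se \<eta>2"
  define Lo2 where "Lo2 = layer_pmf d n So \<eta>2"
  have fL: "finite (set_pmf Le1)" "finite (set_pmf Lo1)" "finite (set_pmf Le2)" "finite (set_pmf Lo2)"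
    unfolding Le1_def Lo1_def Le2_def Lo2_def
    using fin_layer valid_finite vSe vSo f1 f2 by blast+
  have uL: "set_pmf Le1 \<subseteq> unitary_group D" "set_pmf Lo1 \<subseteq> unitary_group D"
           "set_pmf Le2 \<subseteq> unitary_group D" "set_pmf Lo2 \<subseteq> unitary_group D"
    unfolding Le1_def Lo1_def Le2_def Lo2_def D_def
    using supp_layer[OF assms(1)] vSe vSo u1 u2 by blast+
  define M where "M = (\<lambda>\<nu>. moment_op (measure_pmf \<nu>) D t)"
  define Ex1 where "Ex1 = M Le1"
  define Ox1 where "Ox1 = M Lo1"
  define Ex2 where "Ex2 = M Le2"
  define Ox2 where "Ox2 = M Lo2"
  let ?N = "D ^ (2 * t)"
  define \<nu>C where "\<nu>C = conv D (nu_par d n \<eta>1) (nu_par d n \<eta>2)"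
  define \<nu>X where "\<nu>X = nu_par d n (conv (d ^ 2) \<eta>1 \<eta>2)"
  define \<nu>Y where "\<nu>Y = bind_pmf (bernoulli_pmf (1/2)) (\<lambda>b. if b then conv D Le1 Lo2 else conv D Lo1 Le2)"
  have np1: "nu_par d n \<eta>1 = bind_pmf (bernoulli_pmf (1/2)) (\<lambda>b. if b then Le1 else Lo1)"
    unfolding nu_par_def Le1_def Lo1_def Se_def So_def by (rule refl)
  have np2: "nu_par d n \<eta>2 = bind_pmf (bernoulli_pmf (1/2)) (\<lambda>b. if b then Le2 else Lo2)"
    unfolding nu_par_def Le2_def Lo2_def Se_def So_def by (rule refl)
  have npX: "\<nu>X = bind_pmf (bernoulli_pmf (1/2)) (\<lambda>b. if b then conv D Le1 Le2 else conv D Lo1 Lo2)"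
  proof -
    have "\<nu>X = bind_pmf (bernoulli_pmf (1/2)) (\<lambda>b. if b then layer_pmf d n Se (conv (d ^ 2) \<eta>1 \<eta>2)
                                                   else layer_pmf d n So (conv (d ^ 2) \<eta>1 \<eta>2))"
      unfolding \<nu>X_def nu_par_def Se_def So_def by (rule refl)
    also have "\<dots> = bind_pmf (bernoulli_pmf (1/2)) (\<lambda>b. if b then conv D Le1 Le2 else conv D Lo1 Lo2)"
      unfolding layer_pmf_conv[OF assms(1) vSe] layer_pmf_conv[OF assms(1) vSo] Le1_def Lo1_def Le2_def Lo2_def D_def
      by (rule refl)
    finally show ?thesis .
  qed
  have fnp1: "finite (set_pmf (nu_par d n \<eta>1))" unfolding np1 using fL by (intro fin_mix)
  have fnp2: "finite (set_pmf (nu_par d n \<eta>2))" unfolding np2 using fL by (intro fin_mix)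
  have fY: "finite (set_pmf \<nu>Y)" unfolding \<nu>Y_def using fL by (intro fin_mix fin_conv)
  have uY: "set_pmf \<nu>Y \<subseteq> unitary_group D" unfolding \<nu>Y_def set_mix using uL
    by (intro Un_least supp_conv)
  have MC: "M \<nu>C r c = (\<Sum>k<?N. (Ex1 r k / 2 + Ox1 r k / 2) * (Ex2 k c / 2 + Ox2 k c / 2))"
    if "r < ?N" "c < ?N" for r c
    unfolding M_def \<nu>C_def Ex1_def Ox1_def Ex2_def Ox2_def
    using moment_conv[OF Dpos fnp1 fnp2 that] by (simp add: np1 np2 moment_mix fL)
  have MX: "M \<nu>X r c = (\<Sum>k<?N. Ex1 r k * Ex2 k c) / 2 + (\<Sum>k<?N. Ox1 r k * Ox2 k c) / 2"
    if "r < ?N" "c < ?N" for r c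
    unfolding M_def npX Ex1_def Ox1_def Ex2_def Ox2_def
    using fL by (simp add: moment_mix fin_conv moment_conv[OF Dpos _ _ that])
  have MY: "M \<nu>Y r c = (\<Sum>k<?N. Ex1 r k * Ox2 k c) / 2 + (\<Sum>k<?N. Ox1 r k * Ex2 k c) / 2"
    if "r < ?N" "c < ?N" for r c
    unfolding M_def \<nu>Y_def Ex1_def Ox1_def Ex2_def Ox2_def
    using fL by (simp add: moment_mix fin_conv moment_conv[OF Dpos _ _ that])
  have split: "M \<nu>C r c - H.P r c = (M \<nu>X r c - H.P r c) / 2 + (M \<nu>Y r c - H.P r c) / 2"
    if "r < ?N" "c < ?N" for r c
  proof -
    have "(\<Sum>k<?N. (Ex1 r k / 2 + Ox1 r k / 2) * (Ex2 k c / 2 + Ox2 k c / 2))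
        = (\<Sum>k<?N. (Ex1 r k * Ex2 k c + Ex1 r k * Ox2 k c + Ox1 r k * Ex2 k c + Ox1 r k * Ox2 k c) / 4)"
      by (intro sum.cong refl) (simp add: field_simps)
    also have "\<dots> = ((\<Sum>k<?N. Ex1 r k * Ex2 k c) + (\<Sum>k<?N. Ex1 r k * Ox2 k c)
                     + (\<Sum>k<?N. Ox1 r k * Ex2 k c) + (\<Sum>k<?N. Ox1 r k * Ox2 k c)) / 4"
      by (simp only: sum_divide_distrib[symmetric] sum.distrib)
    finally have e: "(\<Sum>k<?N. (Ex1 r k / 2 + Ox1 r k / 2) * (Ex2 k c / 2 + Ox2 k c / 2))
       = ((\<Sum>k<?N. Ex1 r k * Ex2 k c) + (\<Sum>k<?N. Ex1 r k * Ox2 k c)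
                     + (\<Sum>k<?N. Ox1 r k * Ex2 k c) + (\<Sum>k<?N. Ox1 r k * Ox2 k c)) / 4" .
    show ?thesis unfolding MC[OF that] MX[OF that] MY[OF that] e by (simp add: field_simps)
  qed
  have main: "opnorm ?N (\<lambda>r c. M \<nu>C r c - H.P r c) \<le> 1/2 * opnorm ?N (\<lambda>r c. M \<nu>X r c - H.P r c) + 1/2"
  proof (rule opnorm_least)
    fix x :: "nat \<Rightarrow> complex" assume x: "vnorm ?N x \<le> 1"
    have "vnorm ?N (mvmul ?N (\<lambda>r c. M \<nu>C r c - H.P r c) x)
        = vnorm ?N (\<lambda>i. complex_of_real (1/2) * mvmul ?N (\<lambda>r c. M \<nu>X r c - H.P r c) x i
                       + complex_of_real (1/2) * mvmul ?N (\<lambda>r c. M \<nu>Y r c - H.P r c) x i)"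
    proof (rule vnorm_cong)
      fix i assume "i < ?N"
      then show "mvmul ?N (\<lambda>r c. M \<nu>C r c - H.P r c) x i
          = complex_of_real (1/2) * mvmul ?N (\<lambda>r c. M \<nu>X r c - H.P r c) x i
            + complex_of_real (1/2) * mvmul ?N (\<lambda>r c. M \<nu>Y r c - H.P r c) x i"
        unfolding mvmul_def sum_distrib_left sum.distrib[symmetric]
      proof (intro sum.cong refl)
        fix j assume "j \<in> {..<?N}"
        then have "j < ?N" by simp
        then show "(M \<nu>C i j - H.P i j) * x j
           = complex_of_real (1/2) * ((M \<nu>X i j - H.P i j) * x j) + complex_of_real (1/2) * ((M \<nu>Y i j - H.P i j) * x j)"
          using split[OF \<open>i < ?N\<close>, of j] by (simp add: field_simps)
      qed
    qed
    also have "\<dots> \<le> vnorm ?N (\<lambda>i. complex_of_real (1/2) * mvmul ?N (\<lambda>r c. M \<nu>X r c - H.P r c) x i)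
                  + vnorm ?N (\<lambda>i. complex_of_real (1/2) * mvmul ?N (\<lambda>r c. M \<nu>Y r c - H.P r c) x i)"
      by (rule vnorm_add)
    also have "\<dots> = 1/2 * vnorm ?N (mvmul ?N (\<lambda>r c. M \<nu>X r c - H.P r c) x)
                  + 1/2 * vnorm ?N (mvmul ?N (\<lambda>r c. M \<nu>Y r c - H.P r c) x)"
    proof -
      have h: "0 \<le> (1/2::real)" by simp
      show ?thesis by (simp only: vnorm_scale[OF h])
    qed
    also have "\<dots> \<le> 1/2 * opnorm ?N (\<lambda>r c. M \<nu>X r c - H.P r c) + 1/2 * 1"
    proof (intro add_mono mult_left_mono)
      show "vnorm ?N (mvmul ?N (\<lambda>r c. M \<nu>X r c - H.P r c) x) \<le> opnorm ?N (\<lambda>r c. M \<nu>X r c - H.P r c)"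
        by (rule opnorm_upper[OF x])
      show "vnorm ?N (mvmul ?N (\<lambda>r c. M \<nu>Y r c - H.P r c) x) \<le> 1"
        using H.mix_bound[OF fY uY, of x] x unfolding M_def by simp
    qed auto
    finally show "vnorm ?N (mvmul ?N (\<lambda>r c. M \<nu>C r c - H.P r c) x)
        \<le> 1/2 * opnorm ?N (\<lambda>r c. M \<nu>X r c - H.P r c) + 1/2" by simp
  qed
  then have main': "opnorm ?N (\<lambda>r c. moment_op (measure_pmf \<nu>C) D t r c - H.P r c)
      \<le> 1/2 * opnorm ?N (\<lambda>r c. moment_op (measure_pmf \<nu>X) D t r c - H.P r c) + 1/2"
    by (simp add: M_def)
  show ?thesis
    unfolding gap_def D_def[symmetric] \<eta>1_def[symmetric] \<eta>2_def[symmetric]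
      \<nu>C_def[symmetric] \<nu>X_def[symmetric]
    using main' by simp
qed

end
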